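(* Let $n\geq 1$. The symmetric group $\mathfrak{S}_{n+1}$ admits the presentation $$\langle r_1,\dots,r_n\mid r_1^2=1,\ \ r_1r_jr_i=r_{i+1}r_j\ \text{for } 1\leq i<j\leq n\rangle,$$ where $r_i$ corresponds to the cycle $(1,2,\dots,i+1)$ for $1\leq i\leq n$. *)

theory Defs
  imports "HOL-Algebra.Sym_Groups"
begin

definition pres_rels :: "('a, 'b) monoid_scheme \<Rightarrow> nat \<Rightarrow> (nat \<Rightarrow> 'a) \<Rightarrow> bool" where
  "pres_rels G n g \<longleftrightarrow>
     g 1 \<otimes>\<^bsub>G\<^esub> g 1 = \<one>\<^bsub>G\<^esub> \<and>
     (\<forall>i j. 1 \<le> i \<and> i < j \<and> j \<le> n \<longrightarrow>
        g 1 \<otimes>\<^bsub>G\<^esub> g j \<otimes>\<^bsub>G\<^esub> g i = g (Suc i) \<otimes>\<^bsub>G\<^esub> g j)"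

definition rcyc :: "nat \<Rightarrow> nat \<Rightarrow> nat" where
  "rcyc i = cycle_of_list [1..<i+2]"

end

theory Submission
  imports Defs
begin


lemma cyc_upt: "cycle_of_list [a..<a+Suc d] x = (if a \<le> x \<and> x < a + d then Suc x else if x = a + d then a else x)"
proof (induction d arbitrary: a)
  case 0 then show ?case by simp
next
  case (Suc d)
  have l: "[a..<a+Suc (Suc d)] = a # [Suc a..<Suc a + Suc d]"
    by (simp add: upt_rec)
  have l2: "[Suc a..<Suc a + Suc d] = Suc a # [Suc (Suc a)..<Suc a + Suc d]"
    by (simp add: upt_rec)
  have "cycle_of_list [a..<a+Suc (Suc d)] x = transpose a (Suc a) (cycle_of_list [Suc a..<Suc a + Suc d] x)"
    unfolding l l2 by simp
  then show ?case using Suc[of "Suc a"] by (auto simp: transpose_def)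
qed

lemma rcyc_apply: "rcyc i x = (if 1 \<le> x \<and> x \<le> i then Suc x else if x = Suc i then 1 else x)"
  unfolding rcyc_def using cyc_upt[of 1 i x] by (auto simp: add.commute)

lemma rcyc_perm: "rcyc i permutes {1..Suc i}"
proof -
  have "set [1..<i+2] = {1..Suc i}" by auto
  then show ?thesis unfolding rcyc_def using cycle_permutes[of "[1..<i+2]"] by simp
qed



lemma rcyc_carrier: "1 \<le> i \<Longrightarrow> i \<le> n \<Longrightarrow> rcyc i \<in> carrier (sym_group (Suc n))"
  unfolding sym_group_carrier using rcyc_perm[of i] permutes_subset by fastforce

lemma rcyc_rels: "pres_rels (sym_group (Suc n)) n rcyc"
  unfolding pres_rels_def sym_group_mult sym_group_one
  by (auto simp: fun_eq_iff rcyc_apply)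

lemma rcyc_0: "rcyc 0 = id"
  by (auto simp: fun_eq_iff rcyc_apply)

lemma rcyc_step: "1 \<le> a \<Longrightarrow> rcyc (a - 1) \<circ> transpose a (Suc a) = rcyc a"
  by (auto simp: fun_eq_iff rcyc_apply transpose_def)

lemma gen_all: "generate (sym_group (Suc n)) (rcyc ` {1..n}) = carrier (sym_group (Suc n))"
proof -
  let ?S = "sym_group (Suc n)"
  let ?Gen = "generate ?S (rcyc ` {1..n})"
  interpret S: group ?S by (rule sym_group_is_group)
  have sub: "rcyc ` {1..n} \<subseteq> carrier ?S" using rcyc_carrier by auto
  have adj: "transpose a (Suc a) \<in> ?Gen" if "1 \<le> a" "a \<le> n" for a
  proof (cases "a = 1")
    case True
    then show ?thesis using rcyc_step[of 1] rcyc_0 that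
      by (auto intro!: generate.incl)
  next
    case False
    have c1: "rcyc (a-1) \<in> carrier ?S" "rcyc a \<in> carrier ?S" using rcyc_carrier that False by auto
    have ct: "transpose a (Suc a) \<in> carrier ?S" unfolding sym_group_carrier
      using that by (intro permutes_swap_id) auto
    have "transpose a (Suc a) = inv\<^bsub>?S\<^esub> (rcyc (a-1)) \<otimes>\<^bsub>?S\<^esub> rcyc a"
      using S.inv_solve_left[OF ct c1] rcyc_step[OF that(1)] by (simp add: sym_group_mult)
    moreover have "inv\<^bsub>?S\<^esub> (rcyc (a-1)) \<otimes>\<^bsub>?S\<^esub> rcyc a \<in> ?Gen"
      using that False by (intro generate.eng generate.inv generate.incl imageI) auto
    ultimately show ?thesis by simp
  qed
  have tr: "transpose a b \<in> ?Gen" if "1 \<le> a" "a < b" "b \<le> Suc n" for a b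
    using that
  proof (induction b)
    case 0 then show ?case by simp
  next
    case (Suc b)
    show ?case
    proof (cases "a = b")
      case True then show ?thesis using adj Suc by auto
    next
      case False
      then have ab: "a < b" using Suc by auto
      have "transpose a (Suc b) = transpose b (Suc b) \<circ> transpose a b \<circ> transpose b (Suc b)"
        using ab by (auto simp: fun_eq_iff transpose_def)
      moreover have "transpose b (Suc b) \<otimes>\<^bsub>?S\<^esub> transpose a b \<otimes>\<^bsub>?S\<^esub> transpose b (Suc b) \<in> ?Gen"
        using Suc ab adj[of b] by (intro generate.eng) auto
      ultimately show ?thesis by (simp only: sym_group_mult)
    qed
  qed
  show ?thesis
  proof
    show "?Gen \<subseteq> carrier ?S" using S.generate_in_carrier[OF sub] by auto
  next
    show "carrier ?S \<subseteq> ?Gen"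
    proof
      fix p assume "p \<in> carrier ?S"
      then have "p permutes {1..Suc n}" by (simp add: sym_group_carrier)
      from this finite_atLeastAtMost[of 1 "Suc n"] show "p \<in> ?Gen"
      proof (induction rule: permutes_induct)
        case id then show ?case using generate.one[of ?S] by (simp add: sym_group_one id_def)
      next
        case (swap a b p)
        have "transpose a b \<in> ?Gen"
        proof (cases "a < b")
          case True then show ?thesis using tr swap by auto
        next
          case False then show ?thesis using tr[of b a] swap by (auto simp: transpose_commute)
        qed
        then have "transpose a b \<otimes>\<^bsub>?S\<^esub> p \<in> ?Gen" using swap by (intro generate.eng)
        then show ?case by (simp only: sym_group_mult comp_def)
      qed
    qed
  qed
qed



locale presgrp = group G for G (structure) +
  fixes n :: nat and g :: "nat \<Rightarrow> 'a"
  assumes n1: "1 \<le> n"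
    and gc: "\<And>i. 1 \<le> i \<Longrightarrow> i \<le> n \<Longrightarrow> g i \<in> carrier G"
    and sq: "g 1 \<otimes> g 1 = \<one>"
    and rel: "\<And>i j. 1 \<le> i \<Longrightarrow> i < j \<Longrightarrow> j \<le> n \<Longrightarrow> g 1 \<otimes> g j \<otimes> g i = g (Suc i) \<otimes> g j"
begin

lemma g1c: "g 1 \<in> carrier G" using gc n1 by auto

lemma cancel1: "z \<in> carrier G \<Longrightarrow> g 1 \<otimes> (g 1 \<otimes> z) = z"
  using sq g1c by (simp add: m_assoc[symmetric])

lemma rel': assumes "1 \<le> i" "i < j" "j \<le> n"
  shows "g j \<otimes> g i = g 1 \<otimes> (g (Suc i) \<otimes> g j)"
proof -
  have c: "g i \<in> carrier G" "g j \<in> carrier G" "g (Suc i) \<in> carrier G" using gc assms by auto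
  have "g 1 \<otimes> (g j \<otimes> g i) = g (Suc i) \<otimes> g j" using rel[OF assms] g1c c by (simp add: m_assoc)
  then have "g 1 \<otimes> (g 1 \<otimes> (g j \<otimes> g i)) = g 1 \<otimes> (g (Suc i) \<otimes> g j)" by simp
  then show ?thesis using cancel1 c by simp
qed

lemma ucancel [simp]: "u \<in> carrier G \<Longrightarrow> z \<in> carrier G \<Longrightarrow> u \<otimes> (inv u \<otimes> z) = z"
  by (simp add: m_assoc[symmetric])

lemma powcomm: "x \<in> carrier G \<Longrightarrow> y \<in> carrier G \<Longrightarrow> x \<otimes> (x [^] (i::nat) \<otimes> y) = x [^] i \<otimes> (x \<otimes> y)"
  by (metis m_assoc nat_pow_closed nat_pow_Suc nat_pow_Suc2)

lemma conj_pow: "u \<in> carrier G \<Longrightarrow> w \<in> carrier G \<Longrightarrow> (inv u \<otimes> w \<otimes> u) [^] (k::nat) = inv u \<otimes> w [^] k \<otimes> u"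
proof (induction k)
  case 0 then show ?case by simp
next
  case (Suc k)
  have "(inv u \<otimes> w \<otimes> u) [^] Suc k = (inv u \<otimes> w [^] k \<otimes> u) \<otimes> (inv u \<otimes> w \<otimes> u)"
    using Suc by simp
  also have "\<dots> = inv u \<otimes> (w [^] k \<otimes> ((u \<otimes> inv u) \<otimes> (w \<otimes> u)))"
    using Suc by (simp add: m_assoc)
  also have "\<dots> = inv u \<otimes> w [^] Suc k \<otimes> u" using Suc by (simp add: m_assoc)
  finally show ?case .
qed

lemma Z: "1 \<le> m \<Longrightarrow> m \<le> n \<Longrightarrow> g m [^] Suc m = \<one>"
proof (induction m)
  case 0 then show ?case by simp
next
  case (Suc m)
  show ?case
  proof (cases "m = 0")
    case True then show ?thesis using sq g1c by (simp add: numeral_2_eq_2)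
  next
    case False
    define x where "x = g (Suc m)"
    define a where "a = g 1"
    define y where "y = g m"
    have xc: "x \<in> carrier G" and ac: "a \<in> carrier G" and yc: "y \<in> carrier G"
      using gc Suc False unfolding x_def a_def y_def by auto
    have IH: "y [^] Suc m = \<one>" using Suc False unfolding y_def by auto
    have r: "x \<otimes> y = a \<otimes> (x \<otimes> x)"
      using rel'[of m "Suc m"] Suc False unfolding x_def a_def y_def by simp
    have "y = inv x \<otimes> (a \<otimes> x) \<otimes> x"
    proof -
      have "inv x \<otimes> (x \<otimes> y) = inv x \<otimes> (a \<otimes> (x \<otimes> x))" using r by simp
      then show ?thesis using xc yc ac by (simp add: m_assoc[symmetric])
    qed
    then have "y [^] Suc m = inv x \<otimes> (a \<otimes> x) [^] Suc m \<otimes> x"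
      using conj_pow[of x "a \<otimes> x" "Suc m"] xc ac by simp
    then have "inv x \<otimes> (a \<otimes> x) [^] Suc m \<otimes> x = \<one>" using IH by simp
    then have P: "(a \<otimes> x) [^] Suc m = \<one>"
      using xc ac by (metis inv_comm inv_inv inv_solve_left' m_closed nat_pow_closed r_inv inv_closed
            m_assoc one_closed r_one)
    have mn: "Suc m \<le> n" using Suc.prems by simp
    have T: "(a \<otimes> x) [^] (m - i + 2) \<otimes> (g i \<otimes> x [^] Suc i) = a \<otimes> (x \<otimes> x)"
      if "1 \<le> i" "i \<le> m" for i
      using that
    proof (induction i)
      case 0 then show ?case by simp
    next
      case (Suc i)
      show ?case
      proof (cases "i = 0")
        case True
        have "m - 1 + 2 = Suc m"
          using Suc by simp
        then show ?thesis using True P xc ac unfolding a_def by (simp add: numeral_2_eq_2 m_assoc)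
      next
        case False
        have gi: "g i \<in> carrier G" using gc Suc False mn by auto
        have gsi: "g (Suc i) \<in> carrier G" using gc Suc mn by auto
        have rr: "x \<otimes> g i = a \<otimes> (g (Suc i) \<otimes> x)"
          using rel'[of i "Suc m"] Suc False mn unfolding x_def a_def by simp
        have e: "m - i + 2 = Suc (m - Suc i + 2)" using Suc by simp
        have "(a \<otimes> x) [^] (m - i + 2) \<otimes> (g i \<otimes> x [^] Suc i)
             = (a \<otimes> x) [^] (m - Suc i + 2) \<otimes> ((a \<otimes> x) \<otimes> (g i \<otimes> x [^] Suc i))"
          unfolding e using xc ac gi by (simp add: m_assoc)
        also have "(a \<otimes> x) \<otimes> (g i \<otimes> x [^] Suc i) = a \<otimes> ((x \<otimes> g i) \<otimes> x [^] Suc i)"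
          using xc ac gi by (simp add: m_assoc)
        also have "\<dots> = g (Suc i) \<otimes> x [^] Suc (Suc i)"
          unfolding rr using xc ac gi gsi cancel1 a_def
          by (simp add: m_assoc nat_pow_Suc2 powcomm)
        finally show ?thesis using Suc False by simp
      qed
    qed
    have T1: "(a \<otimes> x) [^] (2::nat) \<otimes> (y \<otimes> x [^] Suc m) = a \<otimes> (x \<otimes> x)"
      using T[of m] False xc ac unfolding y_def by (simp add: numeral_2_eq_2)
    have "(a \<otimes> x) [^] (2::nat) \<otimes> (y \<otimes> x [^] Suc m) = a \<otimes> x \<otimes> a \<otimes> (x \<otimes> y) \<otimes> x [^] Suc m"
      using xc ac yc by (simp add: numeral_2_eq_2 m_assoc)
    also have "\<dots> = (a \<otimes> (x \<otimes> x)) \<otimes> (x \<otimes> x [^] Suc m)"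
      unfolding r using xc ac cancel1 a_def by (simp add: m_assoc)
    finally have "(a \<otimes> (x \<otimes> x)) \<otimes> (x \<otimes> x [^] Suc m) = (a \<otimes> (x \<otimes> x)) \<otimes> \<one>"
      using T1 xc ac by simp
    then have "x \<otimes> x [^] Suc m = \<one>" using xc ac by (metis l_cancel_one m_closed one_closed nat_pow_closed r_one)
    then show ?thesis using xc nat_pow_Suc2[of x "Suc m"] unfolding x_def by simp
  qed
qed


definition K :: "nat \<Rightarrow> 'a set" where "K m = generate G (g ` {1..m})"

lemma gsub: "m \<le> n \<Longrightarrow> g ` {1..m} \<subseteq> carrier G"
proof
  fix y assume "m \<le> n" "y \<in> g ` {1..m}"
  then obtain i where "1 \<le> i" "i \<le> m" "y = g i" by auto
  then show "y \<in> carrier G" using gc[of i] \<open>m \<le> n\<close> by simp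
qed

lemma Ksg: "m \<le> n \<Longrightarrow> subgroup (K m) G"
  unfolding K_def using generate_is_subgroup[OF gsub] by simp

lemma Kc: "m \<le> n \<Longrightarrow> k \<in> K m \<Longrightarrow> k \<in> carrier G"
  by (rule subgroup.mem_carrier[OF Ksg])

lemma Kmult: "m \<le> n \<Longrightarrow> k \<in> K m \<Longrightarrow> k' \<in> K m \<Longrightarrow> k \<otimes> k' \<in> K m"
  by (rule subgroup.m_closed[OF Ksg])

lemma Kinv: "m \<le> n \<Longrightarrow> k \<in> K m \<Longrightarrow> inv k \<in> K m"
  by (rule subgroup.m_inv_closed[OF Ksg])

lemma Kone: "m \<le> n \<Longrightarrow> \<one> \<in> K m"
  by (rule subgroup.one_closed[OF Ksg])

lemma gK: "1 \<le> i \<Longrightarrow> i \<le> m \<Longrightarrow> g i \<in> K m"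
  unfolding K_def by (rule generate.incl) auto

lemma C: "m \<le> n \<Longrightarrow> 1 \<le> i \<Longrightarrow> i + j + 1 \<le> m \<Longrightarrow> \<exists>k\<in>K (m-1). g m [^] j \<otimes> g i = k \<otimes> g m [^] j"
proof (induction j arbitrary: i)
  case 0
  have "g i \<in> K (m-1)" using 0 by (intro gK) auto
  moreover have "g i \<in> carrier G" using 0 gc by auto
  ultimately show ?case by (intro bexI[of _ "g i"]) auto
next
  case (Suc j)
  define x where "x = g m"
  have xc: "x \<in> carrier G" using gc Suc unfolding x_def by auto
  have gi: "g i \<in> carrier G" "g (Suc i) \<in> carrier G" using gc Suc by auto
  obtain k1 where k1: "k1 \<in> K (m-1)" "x [^] j \<otimes> g 1 = k1 \<otimes> x [^] j"
    using Suc.IH[of 1] Suc.prems unfolding x_def by auto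
  obtain k2 where k2: "k2 \<in> K (m-1)" "x [^] j \<otimes> g (Suc i) = k2 \<otimes> x [^] j"
    using Suc.IH[of "Suc i"] Suc.prems unfolding x_def by auto
  have kc: "k1 \<in> carrier G" "k2 \<in> carrier G" using Kc[OF _ k1(1)] Kc[OF _ k2(1)] Suc.prems by auto
  have rr: "x \<otimes> g i = g 1 \<otimes> (g (Suc i) \<otimes> x)"
    using rel'[of i m] Suc.prems unfolding x_def by simp
  have "x [^] Suc j \<otimes> g i = (x [^] j \<otimes> g 1) \<otimes> (g (Suc i) \<otimes> x)"
    using xc gi g1c by (simp add: m_assoc rr)
  also have "\<dots> = k1 \<otimes> ((x [^] j \<otimes> g (Suc i)) \<otimes> x)"
    using xc gi g1c kc by (simp only: k1(2)) (simp add: m_assoc)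
  also have "\<dots> = (k1 \<otimes> k2) \<otimes> x [^] Suc j"
    using xc gi g1c kc by (simp only: k2(2)) (simp add: m_assoc)
  finally have "x [^] Suc j \<otimes> g i = (k1 \<otimes> k2) \<otimes> x [^] Suc j" .
  moreover have "k1 \<otimes> k2 \<in> K (m-1)" using Kmult[OF _ k1(1) k2(1)] Suc.prems by simp
  ultimately show ?case unfolding x_def by blast
qed

lemma E: "m \<le> n \<Longrightarrow> j + 1 \<le> m \<Longrightarrow> m \<le> i + j \<Longrightarrow> i \<le> m \<Longrightarrow>
    \<exists>k\<in>K (m-1). g m [^] j \<otimes> g i = k \<otimes> g m [^] Suc j"
proof (induction j arbitrary: i)
  case 0
  then have "i = m" by simp
  then show ?case using 0 gc Kone[of "m-1"] by (intro bexI[of _ \<one>]) auto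
next
  case (Suc j)
  define x where "x = g m"
  have xc: "x \<in> carrier G" using gc Suc unfolding x_def by auto
  show ?case
  proof (cases "i = m")
    case True
    then show ?thesis using Suc.prems xc Kone[of "m-1"] unfolding x_def by (intro bexI[of _ \<one>]) auto
  next
    case False
    have gi: "g i \<in> carrier G" "g (Suc i) \<in> carrier G" using gc Suc False by auto
    obtain k1 where k1: "k1 \<in> K (m-1)" "x [^] j \<otimes> g 1 = k1 \<otimes> x [^] j"
      using C[of m 1 j] Suc.prems unfolding x_def by auto
    obtain k2 where k2: "k2 \<in> K (m-1)" "x [^] j \<otimes> g (Suc i) = k2 \<otimes> x [^] Suc j"
      using Suc.IH[of "Suc i"] Suc.prems False unfolding x_def by auto
    have kc: "k1 \<in> carrier G" "k2 \<in> carrier G" using Kc[OF _ k1(1)] Kc[OF _ k2(1)] Suc.prems by auto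
    have rr: "x \<otimes> g i = g 1 \<otimes> (g (Suc i) \<otimes> x)"
      using rel'[of i m] Suc.prems False unfolding x_def by simp
    have "x [^] Suc j \<otimes> g i = (x [^] j \<otimes> g 1) \<otimes> (g (Suc i) \<otimes> x)"
      using xc gi g1c by (simp add: m_assoc rr)
    also have "\<dots> = k1 \<otimes> ((x [^] j \<otimes> g (Suc i)) \<otimes> x)"
      using xc gi g1c kc by (simp only: k1(2)) (simp add: m_assoc)
    also have "\<dots> = (k1 \<otimes> k2) \<otimes> x [^] Suc (Suc j)"
      using xc gi g1c kc by (simp only: k2(2)) (simp add: m_assoc)
    finally have "x [^] Suc j \<otimes> g i = (k1 \<otimes> k2) \<otimes> x [^] Suc (Suc j)" .
    moreover have "k1 \<otimes> k2 \<in> K (m-1)" using Kmult[OF _ k1(1) k2(1)] Suc.prems by simp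
    ultimately show ?thesis unfolding x_def by blast
  qed
qed


lemma Eit: "m \<le> n \<Longrightarrow> 1 \<le> i \<Longrightarrow> i < m \<Longrightarrow> t \<le> i \<Longrightarrow>
   \<exists>k\<in>K (m-1). g m [^] (m-i) \<otimes> g i [^] t = k \<otimes> g m [^] (m - i + t)"
proof (induction t)
  case 0
  have "g m [^] (m-i) \<in> carrier G" using gc 0 by auto
  then show ?case using Kone[of "m-1"] 0 by (intro bexI[of _ \<one>]) auto
next
  case (Suc t)
  define x where "x = g m"
  have xc: "x \<in> carrier G" using gc Suc unfolding x_def by auto
  have gi: "g i \<in> carrier G" using gc Suc by auto
  obtain k where k: "k \<in> K (m-1)" "x [^] (m-i) \<otimes> g i [^] t = k \<otimes> x [^] (m - i + t)"
    using Suc unfolding x_def by auto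
  obtain e where e: "e \<in> K (m-1)" "x [^] (m-i+t) \<otimes> g i = e \<otimes> x [^] Suc (m - i + t)"
  proof -
    have a1: "m - i + t + 1 \<le> m" "m \<le> i + (m - i + t)" "i \<le> m" using Suc.prems by auto
    show ?thesis using E[OF Suc.prems(1) a1] that unfolding x_def by blast
  qed
  have kc: "k \<in> carrier G" "e \<in> carrier G" using Kc[OF _ k(1)] Kc[OF _ e(1)] Suc.prems by auto
  have "x [^] (m-i) \<otimes> g i [^] Suc t = (x [^] (m-i) \<otimes> g i [^] t) \<otimes> g i"
    using xc gi by (simp add: m_assoc)
  also have "\<dots> = k \<otimes> (x [^] (m - i + t) \<otimes> g i)"
    using xc gi kc by (simp only: k(2)) (simp add: m_assoc)
  also have "\<dots> = (k \<otimes> e) \<otimes> x [^] (m - i + Suc t)"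
    using xc gi kc by (simp only: e(2)) (simp add: m_assoc)
  finally have "x [^] (m-i) \<otimes> g i [^] Suc t = (k \<otimes> e) \<otimes> x [^] (m - i + Suc t)" .
  moreover have "k \<otimes> e \<in> K (m-1)" using Kmult[OF _ k(1) e(1)] Suc.prems by simp
  ultimately show ?case unfolding x_def by blast
qed

definition X :: "nat \<Rightarrow> 'a set" where
  "X m = (\<lambda>(k, j). k \<otimes> g m [^] j) ` (K (m-1) \<times> {..m})"

lemma Xc: "1 \<le> m \<Longrightarrow> m \<le> n \<Longrightarrow> z \<in> X m \<Longrightarrow> z \<in> carrier G"
  unfolding X_def using Kc[of "m-1"] gc[of m] by auto

lemma ginv: "1 \<le> i \<Longrightarrow> i \<le> n \<Longrightarrow> inv (g i) = g i [^] i"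
  using Z[of i] gc[of i] by (intro inv_equality) auto

lemma R: assumes "m \<le> n" "1 \<le> i" "i \<le> m" "z \<in> X m" shows "z \<otimes> g i \<in> X m"
proof -
  define x where "x = g m"
  have m1: "1 \<le> m" using assms by simp
  have xc: "x \<in> carrier G" using gc assms unfolding x_def by auto
  have gi: "g i \<in> carrier G" using gc assms by auto
  obtain k j where kj: "k \<in> K (m-1)" "j \<le> m" "z = k \<otimes> x [^] j"
    using assms(4) unfolding X_def x_def by auto
  have kc: "k \<in> carrier G" using Kc[OF _ kj(1)] assms by simp
  have mem: "k' \<otimes> x [^] j' \<in> X m" if "k' \<in> K (m-1)" "j' \<le> m" for k' j'
    unfolding X_def x_def using that by force
  show ?thesis
  proof (cases "j = m")
    case True
    show ?thesis
    proof (cases "i = m")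
      case True2: True
      have "z \<otimes> g i = k \<otimes> x [^] Suc m" using kj True True2 kc xc by (simp add: m_assoc x_def)
      also have "\<dots> = k \<otimes> x [^] (0::nat)" using Z[of m] assms m1 unfolding x_def by simp
      finally show ?thesis using mem[OF kj(1), of 0] by simp
    next
      case False
      then have im: "i < m" using assms by simp
      obtain k0 where k0: "k0 \<in> K (m-1)" "x [^] (m-i) \<otimes> g i [^] i = k0 \<otimes> x [^] m"
        using Eit[of m i i] assms im unfolding x_def by auto
      have k0c: "k0 \<in> carrier G" using Kc[OF _ k0(1)] assms by simp
      have "x [^] m = inv k0 \<otimes> (x [^] (m-i) \<otimes> g i [^] i)"
        using k0 k0c xc gi by (simp add: m_assoc[symmetric])
      then have "x [^] m \<otimes> g i = inv k0 \<otimes> (x [^] (m-i) \<otimes> g i [^] Suc i)"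
        using k0c xc gi by (simp add: m_assoc)
      also have "\<dots> = inv k0 \<otimes> x [^] (m-i)"
        using Z[of i] assms im xc k0c by simp
      finally have "z \<otimes> g i = (k \<otimes> inv k0) \<otimes> x [^] (m-i)"
        using kj True kc k0c xc gi by (simp add: m_assoc)
      moreover have "k \<otimes> inv k0 \<in> K (m-1)"
        using Kmult[OF _ kj(1) Kinv[OF _ k0(1)]] assms by simp
      ultimately show ?thesis using mem by simp
    qed
  next
    case False
    then have jm: "j < m" using kj by simp
    show ?thesis
    proof (cases "i + j + 1 \<le> m")
      case True
      obtain c where c: "c \<in> K (m-1)" "x [^] j \<otimes> g i = c \<otimes> x [^] j"
        using C[of m i j] assms True unfolding x_def by auto
      have cc: "c \<in> carrier G" using Kc[OF _ c(1)] assms by simp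
      have "z \<otimes> g i = (k \<otimes> c) \<otimes> x [^] j"
        using kj kc cc xc gi by (simp add: m_assoc del: nat_pow_Suc) (simp add: m_assoc[symmetric] c(2) del: nat_pow_Suc)
      moreover have "k \<otimes> c \<in> K (m-1)"
        using Kmult[OF _ kj(1) c(1)] assms by simp
      ultimately show ?thesis using mem kj by simp
    next
      case False
      obtain c where c: "c \<in> K (m-1)" "x [^] j \<otimes> g i = c \<otimes> x [^] Suc j"
        using E[of m j i] assms False jm unfolding x_def by auto
      have cc: "c \<in> carrier G" using Kc[OF _ c(1)] assms by simp
      have "z \<otimes> g i = (k \<otimes> c) \<otimes> x [^] Suc j"
        using kj kc cc xc gi by (simp add: m_assoc del: nat_pow_Suc) (simp add: m_assoc[symmetric] c(2) del: nat_pow_Suc)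
      moreover have "k \<otimes> c \<in> K (m-1)"
        using Kmult[OF _ kj(1) c(1)] assms by simp
      ultimately show ?thesis using mem[of "k \<otimes> c" "Suc j"] jm by simp
    qed
  qed
qed

lemma Rpow: assumes "m \<le> n" "1 \<le> i" "i \<le> m" "z \<in> X m" shows "z \<otimes> g i [^] (t::nat) \<in> X m"
proof (induction t)
  case 0 then show ?case using assms Xc[of m z] by simp
next
  case (Suc t)
  have zc: "z \<in> carrier G" using assms Xc[of m z] by simp
  have gi: "g i \<in> carrier G" using gc assms by auto
  have "z \<otimes> g i [^] Suc t = (z \<otimes> g i [^] t) \<otimes> g i" using zc gi by (simp add: m_assoc)
  then show ?case using R[OF assms(1-3) Suc] by simp
qed

lemma KX: assumes "m \<le> n" "1 \<le> m" shows "K m \<subseteq> X m"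
proof
  fix y assume "y \<in> K m"
  then have "\<forall>z\<in>X m. z \<otimes> y \<in> X m" unfolding K_def
  proof (induction y rule: generate.induct)
    case one then show ?case using Xc assms by auto
  next
    case (incl h)
    then obtain i where "1 \<le> i" "i \<le> m" "h = g i" by auto
    then show ?case using R assms by auto
  next
    case (inv h)
    then obtain i where i: "1 \<le> i" "i \<le> m" "h = g i" by auto
    then have "inv h = g i [^] i" using ginv assms by simp
    then show ?case using Rpow assms i by auto
  next
    case (eng h1 h2)
    have "h1 \<in> carrier G" "h2 \<in> carrier G"
      using eng generate_in_carrier[OF gsub[OF assms(1)]] by auto
    then show ?case using eng Xc[of m] assms by (simp add: m_assoc[symmetric])
  qed
  moreover have "\<one> \<in> X m"
  proof -
    have "\<one> \<otimes> g m [^] (0::nat) \<in> X m" unfolding X_def using Kone[of "m-1"] assms by force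
    then show ?thesis by simp
  qed
  ultimately have "\<one> \<otimes> y \<in> X m" by blast
  moreover have "y \<in> carrier G" using Kc \<open>y \<in> K m\<close> assms by blast
  ultimately show "y \<in> X m" by simp
qed

lemma Kcard: "m \<le> n \<Longrightarrow> finite (K m) \<and> card (K m) \<le> fact (Suc m)"
proof (induction m)
  case 0
  have "K 0 = {\<one>}" unfolding K_def using generate_empty by simp
  then show ?case by simp
next
  case (Suc m)
  have IH: "finite (K m)" "card (K m) \<le> fact (Suc m)" using Suc by auto
  have fX: "finite (X (Suc m))" unfolding X_def using IH by simp
  have "card (X (Suc m)) \<le> card (K m \<times> {..Suc m})" unfolding X_def using card_image_le[of "K m \<times> {..Suc m}" "\<lambda>(k, j). k \<otimes> g (Suc m) [^] j"] IH by simp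
  also have "\<dots> = card (K m) * Suc (Suc m)" using IH by (simp add: card_cartesian_product)
  also have "\<dots> \<le> fact (Suc m) * Suc (Suc m)" using IH(2) by (rule mult_right_mono) simp
  also have "\<dots> = fact (Suc (Suc m))" by (simp only: fact_Suc[of "Suc m"] mult.commute of_nat_id)
  finally have cX: "card (X (Suc m)) \<le> fact (Suc (Suc m))" .
  have sub: "K (Suc m) \<subseteq> X (Suc m)" using KX Suc.prems by simp
  show ?case using fX cX sub card_mono[OF fX sub] finite_subset[OF sub fX] by simp
qed

end


lemma hom_agree:
  assumes "group G" "group H" "f \<in> hom G H" "f' \<in> hom G H" "A \<subseteq> carrier G"
    "\<And>a. a \<in> A \<Longrightarrow> f a = f' a" "x \<in> generate G A"
  shows "f x = f' x"
  using assms(7)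
proof (induction x rule: generate.induct)
  case one
  have "group_hom G H f" "group_hom G H f'" using assms by (auto simp: group_hom_def group_hom_axioms_def)
  then show ?case by (simp add: group_hom.hom_one)
next
  case (incl h) then show ?case using assms by simp
next
  case (inv h)
  have gh: "group_hom G H f" "group_hom G H f'" using assms by (auto simp: group_hom_def group_hom_axioms_def)
  have "h \<in> carrier G" using inv assms by auto
  then show ?case using group_hom.hom_inv[OF gh(1)] group_hom.hom_inv[OF gh(2)] inv assms by simp
next
  case (eng h1 h2)
  have "h1 \<in> carrier G" "h2 \<in> carrier G"
    using eng group.generate_in_carrier[OF assms(1,5)] by auto
  then show ?case using eng assms by (simp add: hom_mult)
qed

theorem corollary5p3:
  fixes n :: nat
  assumes "n \<ge> 1"
  shows "(\<forall>i\<in>{1..n}. rcyc i \<in> carrier (sym_group (n + 1)))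
       \<and> pres_rels (sym_group (n + 1)) n rcyc
       \<and> generate (sym_group (n + 1)) (rcyc ` {1..n}) = carrier (sym_group (n + 1))
       \<and> (\<forall>(H :: ('c, 'd) monoid_scheme) (h :: nat \<Rightarrow> 'c).
            group H \<and> (\<forall>i\<in>{1..n}. h i \<in> carrier H) \<and> pres_rels H n h \<longrightarrow>
            (\<exists>!\<phi>. \<phi> \<in> hom (sym_group (n + 1)) H
                    \<and> (\<forall>x. x \<notin> carrier (sym_group (n + 1)) \<longrightarrow> \<phi> x = undefined)
                    \<and> (\<forall>i\<in>{1..n}. \<phi> (rcyc i) = h i)))"
proof -
  let ?S = "sym_group (Suc n)"
  have S: "group ?S" by (rule sym_group_is_group)
  have p1: "\<forall>i\<in>{1..n}. rcyc i \<in> carrier ?S" using rcyc_carrier by auto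
  have p3: "generate ?S (rcyc ` {1..n}) = carrier ?S" by (rule gen_all)
  have p4: "\<exists>!\<phi>. \<phi> \<in> hom ?S H
                    \<and> (\<forall>x. x \<notin> carrier ?S \<longrightarrow> \<phi> x = undefined)
                    \<and> (\<forall>i\<in>{1..n}. \<phi> (rcyc i) = h i)"
    if H: "group H" and hc: "\<forall>i\<in>{1..n}. h i \<in> carrier H" and hr: "pres_rels H n h"
    for H :: "('c, 'd) monoid_scheme" and h
  proof -
    let ?D = "?S \<times>\<times> H"
    define gg where "gg i = (rcyc i, h i)" for i
    have D: "group ?D" using DirProd_group[OF S H] .
    have rr: "pres_rels ?S n rcyc" by (rule rcyc_rels)
    interpret P: presgrp ?D n gg
    proof (rule presgrp.intro[OF D], rule presgrp_axioms.intro)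
      show "1 \<le> n" using assms .
      show "gg i \<in> carrier ?D" if "1 \<le> i" "i \<le> n" for i
        using that p1 hc unfolding gg_def by auto
      show "gg 1 \<otimes>\<^bsub>?D\<^esub> gg 1 = \<one>\<^bsub>?D\<^esub>"
        using rr hr unfolding gg_def pres_rels_def by simp
      show "gg 1 \<otimes>\<^bsub>?D\<^esub> gg j \<otimes>\<^bsub>?D\<^esub> gg i = gg (Suc i) \<otimes>\<^bsub>?D\<^esub> gg j"
        if "1 \<le> i" "i < j" "j \<le> n" for i j
        using rr hr that unfolding gg_def pres_rels_def by simp
    qed
    define K where "K = generate ?D (gg ` {1..n})"
    have KK: "K = P.K n" unfolding K_def P.K_def by simp
    have fK: "finite K" and cK: "card K \<le> fact (Suc n)" using P.Kcard[of n] KK by auto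
    have Kc: "K \<subseteq> carrier ?D" unfolding K_def using P.generate_in_carrier[OF P.gsub[of n]] by blast
    have fh: "fst \<in> hom ?D ?S"
      unfolding hom_def using mult_DirProd' by auto
    have gh: "group_hom ?D ?S fst" using D S fh by (auto simp: group_hom_def group_hom_axioms_def)
    have img: "fst ` K = carrier ?S"
    proof -
      have "fst ` K = generate ?S (fst ` gg ` {1..n})"
        unfolding K_def using group_hom.generate_img[OF gh P.gsub[of n]] by simp
      also have "fst ` gg ` {1..n} = rcyc ` {1..n}" unfolding gg_def by (auto simp: image_image)
      finally show ?thesis using p3 by simp
    qed
    have inj: "inj_on fst K"
    proof (rule eq_card_imp_inj_on[OF fK])
      have "card (fst ` K) \<le> card K" using card_image_le[OF fK] .
      moreover have "card (fst ` K) = fact (Suc n)" using img sym_group_card_carrier by simp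
      ultimately show "card (fst ` K) = card K" using cK by simp
    qed
    define \<phi> where "\<phi> x = (if x \<in> carrier ?S then snd (the_inv_into K fst x) else undefined)" for x
    have inv_mem: "the_inv_into K fst x \<in> K" "fst (the_inv_into K fst x) = x" if "x \<in> carrier ?S" for x
      using the_inv_into_into[OF inj, of x K] f_the_inv_into_f[OF inj, of x] that img by auto
    have hom: "\<phi> \<in> hom ?S H"
    proof (rule homI)
      fix x assume x: "x \<in> carrier ?S"
      show "\<phi> x \<in> carrier H" using inv_mem[OF x] Kc x unfolding \<phi>_def by (auto simp: mem_Times_iff)
    next
      fix x y assume x: "x \<in> carrier ?S" and y: "y \<in> carrier ?S"
      define a where "a = the_inv_into K fst x"
      define b where "b = the_inv_into K fst y"
      have a: "a \<in> K" "fst a = x" using inv_mem[OF x] unfolding a_def by auto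
      have b: "b \<in> K" "fst b = y" using inv_mem[OF y] unfolding b_def by auto
      have ab: "a \<otimes>\<^bsub>?D\<^esub> b \<in> K"
        using P.Kmult[of n a b] a b KK by simp
      have xy: "x \<otimes>\<^bsub>?S\<^esub> y \<in> carrier ?S" using x y S by (simp add: group.subgroup_self monoid.m_closed group.is_monoid)
      have "the_inv_into K fst (x \<otimes>\<^bsub>?S\<^esub> y) = a \<otimes>\<^bsub>?D\<^esub> b"
        using the_inv_into_f_eq[OF inj _ ab] a b by (simp add: mult_DirProd')
      then show "\<phi> (x \<otimes>\<^bsub>?S\<^esub> y) = \<phi> x \<otimes>\<^bsub>H\<^esub> \<phi> y"
        using x y xy unfolding \<phi>_def a_def[symmetric] b_def[symmetric] by (simp add: mult_DirProd')
    qed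
    have out: "\<forall>x. x \<notin> carrier ?S \<longrightarrow> \<phi> x = undefined" unfolding \<phi>_def by simp
    have vals: "\<forall>i\<in>{1..n}. \<phi> (rcyc i) = h i"
    proof
      fix i assume i: "i \<in> {1..n}"
      have "gg i \<in> K" unfolding K_def using i by (intro generate.incl) auto
      then have "the_inv_into K fst (rcyc i) = gg i"
        using the_inv_into_f_eq[OF inj, of "gg i" "rcyc i"] unfolding gg_def by simp
      then show "\<phi> (rcyc i) = h i" using p1 i unfolding \<phi>_def gg_def by simp
    qed
    show ?thesis
    proof (rule ex1I[of _ \<phi>])
      show "\<phi> \<in> hom ?S H \<and> (\<forall>x. x \<notin> carrier ?S \<longrightarrow> \<phi> x = undefined) \<and> (\<forall>i\<in>{1..n}. \<phi> (rcyc i) = h i)"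
        using hom out vals by blast
    next
      fix \<psi> assume \<psi>: "\<psi> \<in> hom ?S H \<and> (\<forall>x. x \<notin> carrier ?S \<longrightarrow> \<psi> x = undefined) \<and> (\<forall>i\<in>{1..n}. \<psi> (rcyc i) = h i)"
      show "\<psi> = \<phi>"
      proof
        fix x show "\<psi> x = \<phi> x"
        proof (cases "x \<in> carrier ?S")
          case True
          then have xg: "x \<in> generate ?S (rcyc ` {1..n})" using p3 by simp
          show ?thesis
            by (rule hom_agree[OF S H _ hom _ _ xg]) (use \<psi> vals p1 in auto)
        next
          case False then show ?thesis using \<psi> out by simp
        qed
      qed
    qed
  qed
  show ?thesis using p1 p3 p4 rcyc_rels[of n] by simp
qed


end
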